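(* Let $a\ge 0$ and $b>0$ be constants. Let $\{x^*_{it}\}$ be an optimal solution of the offline problem $$\min_{x}\ \int_0^T\Big(a\sum_{i\in\mathcal I_t}x_{it}+b\Big(\sum_{i\in\mathcal I_t}x_{it}\Big)^2\Big)\,dt$$ subject to $\int_{t_i^{(s)}}^{t_i^{(e)}}x_{it}\,dt\ge D_i$ for $i=1,\dots,N$ and $0\le x_{it}\le U_i$ for $t\in[t_i^{(s)},t_i^{(e)}]$, and let $s^*_t=\sum_{i\in\mathcal I_t}x^*_{it}$. Then $s^*_t$ is (almost everywhere) constant on each time interval between two consecutive event instants. Moreover, there exists an optimal solution in which every $x^*_{it}$ is constant in $t$ on each such time interval. *)

theory Defs
  imports "HOL-Analysis.Analysis"
begin

text \<open>N jobs (EVs) indexed by i < N, with arrival ts i, departure te i,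
  demand D i and rate cap U i.  A schedule is x :: nat \<Rightarrow> real \<Rightarrow> real,
  x i t being the rate of job i at time t (only relevant on [ts i, te i]).\<close>

definition active :: "nat \<Rightarrow> (nat \<Rightarrow> real) \<Rightarrow> (nat \<Rightarrow> real) \<Rightarrow> real \<Rightarrow> nat set" where
  "active N ts te t = {i. i < N \<and> ts i \<le> t \<and> t \<le> te i}"

definition agg :: "nat \<Rightarrow> (nat \<Rightarrow> real) \<Rightarrow> (nat \<Rightarrow> real) \<Rightarrow> (nat \<Rightarrow> real \<Rightarrow> real) \<Rightarrow> real \<Rightarrow> real" where
  "agg N ts te x t = (\<Sum>i\<in>active N ts te t. x i t)"

definition cost :: "real \<Rightarrow> real \<Rightarrow> real \<Rightarrow> nat \<Rightarrow> (nat \<Rightarrow> real) \<Rightarrow> (nat \<Rightarrow> real)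
    \<Rightarrow> (nat \<Rightarrow> real \<Rightarrow> real) \<Rightarrow> real" where
  "cost a b T N ts te x =
     (LINT t:{0..T}|lborel. a * agg N ts te x t + b * (agg N ts te x t)\<^sup>2)"

definition feasible :: "nat \<Rightarrow> (nat \<Rightarrow> real) \<Rightarrow> (nat \<Rightarrow> real) \<Rightarrow> (nat \<Rightarrow> real) \<Rightarrow> (nat \<Rightarrow> real)
    \<Rightarrow> (nat \<Rightarrow> real \<Rightarrow> real) \<Rightarrow> bool" where
  "feasible N ts te D U x \<longleftrightarrow>
     (\<forall>i<N. set_borel_measurable lborel {ts i..te i} (x i)
          \<and> (\<forall>t\<in>{ts i..te i}. 0 \<le> x i t \<and> x i t \<le> U i)
          \<and> (LINT t:{ts i..te i}|lborel. x i t) \<ge> D i)"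

definition optimal :: "real \<Rightarrow> real \<Rightarrow> real \<Rightarrow> nat \<Rightarrow> (nat \<Rightarrow> real) \<Rightarrow> (nat \<Rightarrow> real)
    \<Rightarrow> (nat \<Rightarrow> real) \<Rightarrow> (nat \<Rightarrow> real) \<Rightarrow> (nat \<Rightarrow> real \<Rightarrow> real) \<Rightarrow> bool" where
  "optimal a b T N ts te D U x \<longleftrightarrow>
     feasible N ts te D U x \<and>
     (\<forall>y. feasible N ts te D U y \<longrightarrow> cost a b T N ts te x \<le> cost a b T N ts te y)"

definition events :: "real \<Rightarrow> nat \<Rightarrow> (nat \<Rightarrow> real) \<Rightarrow> (nat \<Rightarrow> real) \<Rightarrow> real set" where
  "events T N ts te = {0, T} \<union> ts ` {..<N} \<union> te ` {..<N}"

definition consecutive :: "real set \<Rightarrow> real \<Rightarrow> real \<Rightarrow> bool" where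
  "consecutive E t1 t2 \<longleftrightarrow> t1 \<in> E \<and> t2 \<in> E \<and> t1 < t2 \<and> {t1<..<t2} \<inter> E = {}"

end

theory Submission
  imports Defs
begin

lemma bint:
  fixes f :: "real \<Rightarrow> real"
  assumes "f \<in> borel_measurable lborel" "\<And>t. \<bar>f t\<bar> \<le> B"
  shows "set_integrable lborel {u..v} f" "set_integrable lborel {u<..<v} f"
  unfolding set_integrable_def
  using integrableI_bounded_set_indicator[of "{u..v}" lborel f B]
    integrableI_bounded_set_indicator[of "{u<..<v}" lborel f B] assms
    emeasure_bounded_finite[of "{u..v}"] emeasure_bounded_finite[of "{u<..<v}"]
  by (auto simp: less_top)

lemma set_integral_sum':
  fixes f :: "'i \<Rightarrow> real \<Rightarrow> real"
  assumes "finite I" "\<And>i. i \<in> I \<Longrightarrow> set_integrable lborel A (f i)"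
  shows "(LINT t:A|lborel. (\<Sum>i\<in>I. f i t)) = (\<Sum>i\<in>I. LINT t:A|lborel. f i t)"
  using assms unfolding set_lebesgue_integral_def set_integrable_def
  by (simp only: scaleR_sum_right) (rule Bochner_Integration.integral_sum, auto)

lemma Icc_Ioo:
  fixes f :: "real \<Rightarrow> real"
  assumes "u \<le> v"
  shows "(LINT t:{u..v}|lborel. f t) = (LINT t:{u<..<v}|lborel. f t)"
  using interval_integral_Icc[OF assms, of f] interval_integral_Ioo[of "ereal u" "ereal v" f] assms
  by simp

lemma DL:
  fixes f :: "real \<Rightarrow> real"
  assumes fin: "finite E" and int: "set_integrable lborel {u..v} f"
    and "u \<in> E" "v \<in> E" "u \<le> v"
  shows "(LINT t:{u..v}|lborel. f t) =
     (\<Sum>(p,q)\<in>{(p,q). consecutive E p q \<and> u \<le> p \<and> q \<le> v}. LINT t:{p<..<q}|lborel. f t)"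
  using assms(2-)
proof (induction "card (E \<inter> {u<..<v})" arbitrary: u v rule: less_induct)
  case less
  have finS: "finite {(p,q). consecutive E p q \<and> u' \<le> p \<and> q \<le> v'}" for u' v'
    by (rule finite_subset[of _ "E \<times> E"]) (auto simp: consecutive_def fin)
  show ?case
  proof (cases "E \<inter> {u<..<v} = {}")
    case True
    show ?thesis
    proof (cases "u = v")
      case True
      have "(LINT t:{u..v}|lborel. f t) = 0"
        using interval_integral_Icc[of u v f] True by simp
      moreover have "{(p,q). consecutive E p q \<and> u \<le> p \<and> q \<le> v} = {}"
        using True by (auto simp: consecutive_def)
      ultimately show ?thesis by (metis (no_types) sum.empty)
    next
      case False
      have "{(p,q). consecutive E p q \<and> u \<le> p \<and> q \<le> v} = {(u,v)}"
      proof (auto simp: consecutive_def)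
        show "u < v" using False less.prems by simp
        show "\<And>x. u < x \<Longrightarrow> x < v \<Longrightarrow> x \<in> E \<Longrightarrow> False" using True by auto
        show "u \<in> E" "v \<in> E" using less.prems by auto
      next
        fix p q assume "p \<in> E" "q \<in> E" "p < q" "u \<le> p" "q \<le> v"
        then show "p = u" "q = v" using True by (auto simp: not_less dest!: le_neq_trans)
      qed
      then show ?thesis using Icc_Ioo[OF less.prems(4)] by simp
    qed
  next
    case False
    then obtain w where w: "w \<in> E" "u < w" "w < v" by auto
    have card1: "card (E \<inter> {u<..<w}) < card (E \<inter> {u<..<v})"
      by (rule psubset_card_mono) (use fin w in auto)
    have card2: "card (E \<inter> {w<..<v}) < card (E \<inter> {u<..<v})"
      by (rule psubset_card_mono) (use fin w in auto)
    have int1: "set_integrable lborel {u..w} f"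
      by (rule set_integrable_subset[OF less.prems(1)]) (use w in auto)
    have int2: "set_integrable lborel {w..v} f"
      by (rule set_integrable_subset[OF less.prems(1)]) (use w in auto)
    note IH1 = less.hyps[OF card1 int1 less.prems(2) w(1)] 
    note IH2 = less.hyps[OF card2 int2 w(1) less.prems(3)]
    have intoo: "set_integrable lborel {u<..<v} f"
      by (rule set_integrable_subset[OF less.prems(1)]) auto
    have "(LBINT t=ereal u..ereal w. f t) + (LBINT t=ereal w..ereal v. f t) = (LBINT t=ereal u..ereal v. f t)"
      by (rule interval_integral_sum) (use w intoo in \<open>auto simp: interval_lebesgue_integrable_def min_def max_def\<close>)
    then have split: "(LINT t:{u..v}|lborel. f t) = (LINT t:{u..w}|lborel. f t) + (LINT t:{w..v}|lborel. f t)"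
      using w by (simp add: interval_integral_Icc)
    have Sset: "{(p,q). consecutive E p q \<and> u \<le> p \<and> q \<le> v} =
       {(p,q). consecutive E p q \<and> u \<le> p \<and> q \<le> w} \<union> {(p,q). consecutive E p q \<and> w \<le> p \<and> q \<le> v}"
      using w by (auto simp: consecutive_def) (metis IntI emptyE greaterThanLessThan_iff linorder_not_le)
    have Sdisj: "{(p,q). consecutive E p q \<and> u \<le> p \<and> q \<le> w} \<inter> {(p,q). consecutive E p q \<and> w \<le> p \<and> q \<le> v} = {}"
      by (auto simp: consecutive_def)
    show ?thesis
      unfolding split Sset using IH1 IH2 w
      by (subst sum.union_disjoint[OF finS finS Sdisj]) simp
  qed
qed


lemma gbound:
  fixes a b s B :: real
  assumes "0 \<le> a" "0 \<le> b" "\<bar>s\<bar> \<le> B"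
  shows "abs (a * s + b * s^2) \<le> a*B + b*B^2"
proof -
  have "s^2 = \<bar>s\<bar>^2" by simp
  also have "\<dots> \<le> B^2" by (rule power_mono) (use assms in auto)
  finally have sq: "s^2 \<le> B^2" .
  have "abs (a * s + b * s^2) \<le> abs (a * s) + abs (b * s^2)" by (rule abs_triangle_ineq)
  also have "\<dots> = a * \<bar>s\<bar> + b * s^2" using assms by (simp add: abs_mult)
  also have "\<dots> \<le> a*B + b*B^2"
    by (intro add_mono mult_left_mono) (use assms sq in auto)
  finally show ?thesis .
qed

theorem lemma1:
  fixes a b T :: real and N :: nat and ts te D U :: "nat \<Rightarrow> real"
    and x :: "nat \<Rightarrow> real \<Rightarrow> real"
  assumes "a \<ge> 0" and "b > 0"
    and "\<forall>i<N. 0 \<le> ts i \<and> ts i < te i \<and> te i \<le> T"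
    and "optimal a b T N ts te D U x"
  shows "(\<forall>t1 t2. consecutive (events T N ts te) t1 t2 \<longrightarrow>
            (\<exists>c. AE t in lborel. t \<in> {t1<..<t2} \<longrightarrow> agg N ts te x t = c))
       \<and> (\<exists>y. optimal a b T N ts te D U y \<and>
            (\<forall>t1 t2. consecutive (events T N ts te) t1 t2 \<longrightarrow>
               (\<forall>i<N. \<exists>c. \<forall>t\<in>{t1<..<t2}. y i t = c)))"
proof (cases "N = 0")
  case True
  have agg0: "agg N ts te z t = 0" for z t using True by (simp add: agg_def active_def)
  show ?thesis
  proof
    show "\<forall>t1 t2. consecutive (events T N ts te) t1 t2 \<longrightarrow>
            (\<exists>c. AE t in lborel. t \<in> {t1<..<t2} \<longrightarrow> agg N ts te x t = c)"
      by (auto simp: agg0)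
    show "\<exists>y. optimal a b T N ts te D U y \<and>
            (\<forall>t1 t2. consecutive (events T N ts te) t1 t2 \<longrightarrow>
               (\<forall>i<N. \<exists>c. \<forall>t\<in>{t1<..<t2}. y i t = c))"
      using assms(4) True by auto
  qed
next
  case False
  define E where "E = events T N ts te"
  define C where "C = {(p,q). consecutive E p q}"
  have tsE: "ts i \<in> E" "te i \<in> E" if "i < N" for i
    using that by (auto simp: E_def events_def)
  have T0: "0 \<le> T" using assms(3)[rule_format, of 0] False by linarith
  have Esub: "E \<subseteq> {0..T}" using assms(3) T0
    by (auto simp: E_def events_def)
  have finE: "finite E" by (simp add: E_def events_def)
  have E0: "0 \<in> E" "T \<in> E" by (auto simp: E_def events_def)
  have feas: "feasible N ts te D U x"
    and opt: "\<And>z. feasible N ts te D U z \<Longrightarrow> cost a b T N ts te x \<le> cost a b T N ts te z"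
    using assms(4) by (auto simp: optimal_def)
  define xi where "xi i t = indicator {ts i..te i} t * x i t" for i t
  have xim: "xi i \<in> borel_measurable lborel" if "i < N" for i
    using feas that by (auto simp: feasible_def set_borel_measurable_def xi_def[abs_def])
  have xb: "0 \<le> x i t \<and> x i t \<le> U i" if "i < N" "t \<in> {ts i..te i}" for i t
    using feas that by (auto simp: feasible_def)
  have U0: "0 \<le> U i" if "i < N" for i
    using xb[OF that, of "ts i"] assms(3) that by force
  have xib: "0 \<le> xi i t \<and> xi i t \<le> U i" if "i < N" for i t
    using xb[OF that, of t] U0[OF that] by (auto simp: xi_def indicator_def)
  have xiint: "set_integrable lborel {u..v} (xi i)" "set_integrable lborel {u<..<v} (xi i)"
    if "i < N" for i u v
    using bint[OF xim[OF that], of "U i"] xib[OF that] by auto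
  have AS: "(ts i \<le> t \<and> t \<le> te i) \<longleftrightarrow> (ts i \<le> p \<and> q \<le> te i)"
    if "(p,q) \<in> C" "t \<in> {p<..<q}" "i < N" for p q t i
  proof
    assume h: "ts i \<le> t \<and> t \<le> te i"
    have nE: "z \<notin> E" if "p < z" "z < q" for z using \<open>(p,q) \<in> C\<close> that
      by (auto simp: C_def consecutive_def)
    show "ts i \<le> p \<and> q \<le> te i"
      using nE[of "ts i"] nE[of "te i"] tsE[OF \<open>i<N\<close>] h \<open>t \<in> {p<..<q}\<close> by force
  next
    assume "ts i \<le> p \<and> q \<le> te i"
    then show "ts i \<le> t \<and> t \<le> te i" using \<open>t \<in> {p<..<q}\<close> by auto
  qed
  have disj: "p = p' \<and> q = q'"
    if "(p,q) \<in> C" "(p',q') \<in> C" "t \<in> {p<..<q}" "t \<in> {p'<..<q'}" for p q p' q' t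
  proof -
    have a: "p' \<notin> {p<..<q}" "q' \<notin> {p<..<q}" "p \<notin> {p'<..<q'}" "q \<notin> {p'<..<q'}"
    proof -
      have "p'\<in>E" "q'\<in>E" "p\<in>E" "q\<in>E" "{p<..<q}\<inter>E={}" "{p'<..<q'}\<inter>E={}"
        using that by (auto simp: C_def consecutive_def)
      then show "p' \<notin> {p<..<q}" "q' \<notin> {p<..<q}" "p \<notin> {p'<..<q'}" "q \<notin> {p'<..<q'}" by blast+
    qed
    then show ?thesis using that(3,4) unfolding greaterThanLessThan_iff by linarith
  qed
  have finC: "finite {(p,q). consecutive E p q \<and> P p q}" for P
    by (rule finite_subset[of _ "E \<times> E"]) (auto simp: consecutive_def finE)
  define avg where "avg i p q = (LINT t:{p<..<q}|lborel. xi i t) / (q - p)" for i p q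
  define Ci where "Ci i = {(p,q). consecutive E p q \<and> ts i \<le> p \<and> q \<le> te i}" for i
  define y where "y i t = (\<Sum>(p,q)\<in>Ci i. indicator {p<..<q} t * avg i p q)" for i t
  have PW: "y i t = (if ts i \<le> p \<and> q \<le> te i then avg i p q else 0)"
    if pq: "(p,q) \<in> C" and t: "t \<in> {p<..<q}" for i p q t
  proof -
    have "y i t = (\<Sum>k\<in>Ci i. if k = (p,q) then avg i p q else 0)"
      unfolding y_def
    proof (rule sum.cong[OF refl], clarify)
      fix p' q' assume "(p',q') \<in> Ci i"
      then have "(p',q') \<in> C" by (simp add: Ci_def C_def)
      then show "indicator {p'<..<q'} t * avg i p' q' = (if (p',q') = (p,q) then avg i p q else 0)"
      proof (cases "t \<in> {p'<..<q'}")
        case True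
        then show ?thesis using disj[OF pq \<open>(p',q') \<in> C\<close> t True] by simp
      next
        case False
        then have "(p',q') \<noteq> (p,q)" using t by auto
        then show ?thesis using False by (simp only: if_False indicator_simps) simp
      qed
    qed
    also have "\<dots> = (if (p,q) \<in> Ci i then avg i p q else 0)"
      using finC[of "\<lambda>p q. ts i \<le> p \<and> q \<le> te i"] by (simp add: Ci_def)
    finally show ?thesis using pq by (simp add: Ci_def C_def)
  qed
  have aggE: "agg N ts te z t = (\<Sum>i<N. indicator {ts i..te i} t * z i t)" for z t
  proof -
    have "active N ts te t = {i\<in>{..<N}. ts i \<le> t \<and> t \<le> te i}" by (auto simp: active_def)
    then show ?thesis unfolding agg_def by (simp add: sum.inter_filter indicator_def) (rule sum.cong; auto)
  qed
  define m where "m p q = (\<Sum>i<N. if ts i \<le> p \<and> q \<le> te i then avg i p q else 0)" for p q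
  have aggy: "agg N ts te y t = m p q" if pq: "(p,q) \<in> C" and t: "t \<in> {p<..<q}" for p q t
    unfolding aggE m_def
  proof (rule sum.cong[OF refl])
    fix i assume "i \<in> {..<N}"
    then have i: "i < N" by simp
    show "indicator {ts i..te i} t * y i t = (if ts i \<le> p \<and> q \<le> te i then avg i p q else 0)"
      using AS[OF pq t i] PW[OF pq t, of i] by (simp add: indicator_def)
  qed
  define s where "s = agg N ts te x"
  have sdef: "s = (\<lambda>t. \<Sum>i<N. xi i t)" by (rule ext) (simp add: s_def aggE xi_def)
  have sm: "s \<in> borel_measurable lborel" unfolding sdef
    by (rule borel_measurable_sum) (use xim in auto)
  define B where "B = (\<Sum>i<N. U i)"
  have sb: "\<bar>s t\<bar> \<le> B" for t
  proof -
    have "\<bar>s t\<bar> \<le> (\<Sum>i<N. \<bar>xi i t\<bar>)" unfolding sdef by (rule sum_abs)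
    also have "\<dots> \<le> B" unfolding B_def by (rule sum_mono) (use xib in force)
    finally show ?thesis .
  qed
  have intS: "(LINT t:{p<..<q}|lborel. s t) = (q - p) * m p q" if pq: "(p,q) \<in> C" for p q
  proof -
    have pq': "p < q" using pq by (simp add: C_def consecutive_def)
    have "(LINT t:{p<..<q}|lborel. s t) = (\<Sum>i<N. LINT t:{p<..<q}|lborel. xi i t)"
      unfolding sdef by (rule set_integral_sum') (use xiint in auto)
    also have "\<dots> = (\<Sum>i<N. (q - p) * (if ts i \<le> p \<and> q \<le> te i then avg i p q else 0))"
    proof (rule sum.cong[OF refl])
      fix i assume "i \<in> {..<N}"
      then have i: "i < N" by simp
      show "(LINT t:{p<..<q}|lborel. xi i t) = (q - p) * (if ts i \<le> p \<and> q \<le> te i then avg i p q else 0)"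
      proof (cases "ts i \<le> p \<and> q \<le> te i")
        case True
        then show ?thesis using pq' by (simp add: avg_def)
      next
        case False
        have "(LINT t:{p<..<q}|lborel. xi i t) = (LINT t:{p<..<q}|lborel. 0)"
          by (rule set_lebesgue_integral_cong) (use AS[OF pq _ i] False in \<open>auto simp: xi_def indicator_def\<close>)
        then show ?thesis using False by (simp only: if_False) (simp add: set_lebesgue_integral_def)
      qed
    qed
    also have "\<dots> = (q - p) * m p q" by (simp add: m_def sum_distrib_left)
    finally show ?thesis .
  qed
  have CiC: "Ci i \<subseteq> C" for i by (auto simp: Ci_def C_def)
  have ym: "y i \<in> borel_measurable lborel" for i
    unfolding y_def[abs_def] by (rule borel_measurable_sum) auto
  have avgb: "0 \<le> avg i p q \<and> avg i p q \<le> U i" if i: "i < N" and pq: "(p,q) \<in> Ci i" for i p q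
  proof -
    have pq': "p < q" using pq by (simp add: Ci_def consecutive_def)
    have meas: "measure lborel {p<..<q} = q - p" using pq' by simp
    have fin: "emeasure lborel {p<..<q} \<noteq> \<infinity>" using pq' by simp
    have "(LINT t:{p<..<q}|lborel. (0::real)) \<le> (LINT t:{p<..<q}|lborel. xi i t)"
      by (rule set_integral_mono) (use xiint[OF i] xib[OF i] bint[of "\<lambda>_. 0" 0] in auto)
    then have l0: "0 \<le> (LINT t:{p<..<q}|lborel. xi i t)" by (simp add: set_lebesgue_integral_def)
    have "(LINT t:{p<..<q}|lborel. xi i t) \<le> (LINT t:{p<..<q}|lborel. U i)"
      by (rule set_integral_mono) (use xiint[OF i] xib[OF i] bint[of "\<lambda>_. U i" "\<bar>U i\<bar>"] in auto)
    also have "\<dots> = (q - p) * U i" using set_integral_const[of "{p<..<q}" lborel "U i"] fin meas by simp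
    finally have l1: "(LINT t:{p<..<q}|lborel. xi i t) \<le> (q - p) * U i" .
    show ?thesis using l0 l1 pq' unfolding avg_def
      by (auto simp: divide_simps mult.commute)
  qed
  have yzero: "y i t = 0" if "\<not> (\<exists>(p,q)\<in>C. t \<in> {p<..<q})" for i t
    unfolding y_def by (rule sum.neutral) (use that CiC in \<open>fastforce simp: indicator_def\<close>)
  have yb: "0 \<le> y i t \<and> y i t \<le> U i" if i: "i < N" for i t
  proof (cases "\<exists>(p,q)\<in>C. t \<in> {p<..<q}")
    case True
    then obtain p q where pq: "(p,q) \<in> C" and t: "t \<in> {p<..<q}" by auto
    show ?thesis using PW[OF pq t, of i] avgb[OF i, of p q] U0[OF i] pq
      by (auto simp: Ci_def C_def)
  next
    case False
    then show ?thesis using yzero[OF False] U0[OF i] by simp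
  qed
  have yint: "(LINT t:{ts i..te i}|lborel. y i t) = (LINT t:{ts i..te i}|lborel. xi i t)"
    if i: "i < N" for i
  proof -
    have le: "ts i \<le> te i" using assms(3) i by force
    have yi: "set_integrable lborel {ts i..te i} (y i)"
      using bint[OF ym, of i "U i" "ts i" "te i"] yb[OF i] by force
    have "(LINT t:{ts i..te i}|lborel. y i t) = (\<Sum>(p,q)\<in>Ci i. LINT t:{p<..<q}|lborel. y i t)"
      unfolding Ci_def by (rule DL[OF finE yi tsE[OF i] le])
    also have "\<dots> = (\<Sum>(p,q)\<in>Ci i. LINT t:{p<..<q}|lborel. xi i t)"
    proof (rule sum.cong[OF refl], clarify)
      fix p q assume pq: "(p,q) \<in> Ci i"
      have pqC: "(p,q) \<in> C" using pq CiC by auto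
      have pq': "p < q" using pq by (simp add: Ci_def consecutive_def)
      have c: "ts i \<le> p \<and> q \<le> te i" using pq by (simp add: Ci_def)
      have "(LINT t:{p<..<q}|lborel. y i t) = (LINT t:{p<..<q}|lborel. avg i p q)"
        by (rule set_lebesgue_integral_cong) (use PW[OF pqC] c in auto)
      also have "\<dots> = (q - p) * avg i p q"
        using set_integral_const[of "{p<..<q}" lborel "avg i p q"] pq' by simp
      also have "\<dots> = (LINT t:{p<..<q}|lborel. xi i t)" using pq' by (simp add: avg_def)
      finally show "(LINT t:{p<..<q}|lborel. y i t) = (LINT t:{p<..<q}|lborel. xi i t)" .
    qed
    also have "\<dots> = (LINT t:{ts i..te i}|lborel. xi i t)"
      unfolding Ci_def by (rule DL[OF finE xiint(1)[OF i] tsE[OF i] le, symmetric])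
    finally show ?thesis .
  qed
  have feasy: "feasible N ts te D U y"
    unfolding feasible_def
  proof (intro allI impI conjI ballI)
    fix i assume i: "i < N"
    show "set_borel_measurable lborel {ts i..te i} (y i)"
      unfolding set_borel_measurable_def using ym[of i] by measurable
    fix t show "0 \<le> y i t" "y i t \<le> U i" using yb[OF i] by auto
  next
    fix i assume i: "i < N"
    have "(LINT t:{ts i..te i}|lborel. xi i t) = (LINT t:{ts i..te i}|lborel. x i t)"
      by (rule set_lebesgue_integral_cong) (auto simp: xi_def)
    then show "D i \<le> (LINT t:{ts i..te i}|lborel. y i t)"
      using feas i yint[OF i] by (auto simp: feasible_def)
  qed
  define S0 where "S0 = {(p,q). consecutive E p q \<and> 0 \<le> p \<and> q \<le> T}"
  have S0C: "S0 \<subseteq> C" by (auto simp: S0_def C_def)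
  have finS0: "finite S0" unfolding S0_def by (rule finC)
  have costdec: "cost a b T N ts te z = (\<Sum>(p,q)\<in>S0. LINT t:{p<..<q}|lborel. a * agg N ts te z t + b * (agg N ts te z t)\<^sup>2)"
    if zm: "agg N ts te z \<in> borel_measurable lborel" and zb: "\<And>t. \<bar>agg N ts te z t\<bar> \<le> B" for z
  proof -
    have gm: "(\<lambda>t. a * agg N ts te z t + b * (agg N ts te z t)\<^sup>2) \<in> borel_measurable lborel"
      using zm by measurable
    have gi: "set_integrable lborel {0..T} (\<lambda>t. a * agg N ts te z t + b * (agg N ts te z t)\<^sup>2)"
      using bint(1)[OF gm, of "a*B + b*B^2"] gbound[OF assms(1) _ zb] assms(2) by auto
    show ?thesis unfolding cost_def S0_def by (rule DL[OF finE gi E0 T0])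
  qed
  have aggyf: "agg N ts te y = (\<lambda>t. \<Sum>i<N. indicator {ts i..te i} t * y i t)"
    by (rule ext) (rule aggE)
  have aym: "agg N ts te y \<in> borel_measurable lborel"
    unfolding aggyf by (rule borel_measurable_sum) (use ym in measurable)
  have ayb: "\<bar>agg N ts te y t\<bar> \<le> B" for t
  proof -
    have "\<bar>agg N ts te y t\<bar> \<le> (\<Sum>i<N. \<bar>indicator {ts i..te i} t * y i t\<bar>)" unfolding aggyf by (rule sum_abs)
    also have "\<dots> \<le> B" unfolding B_def
      by (rule sum_mono) (use yb in \<open>force simp: indicator_def\<close>)
    finally show ?thesis .
  qed
  have sm': "agg N ts te x \<in> borel_measurable lborel" using sm by (simp add: s_def)
  have sb': "\<bar>agg N ts te x t\<bar> \<le> B" for t using sb by (simp add: s_def)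
  define h where "h p q = (LINT t:{p<..<q}|lborel. (s t - m p q)\<^sup>2)" for p q
  have perx: "(LINT t:{p<..<q}|lborel. a * s t + b * (s t)\<^sup>2) = (q - p) * (a * m p q + b * (m p q)\<^sup>2) + b * h p q"
    if pq: "(p,q) \<in> C" for p q
  proof -
    define M where "M = m p q"
    have pq': "p < q" using pq by (simp add: C_def consecutive_def)
    have i1: "set_integrable lborel {p<..<q} s" using bint(2)[OF sm sb] .
    have m2: "(\<lambda>t. (s t - M)\<^sup>2) \<in> borel_measurable lborel" using sm by measurable
    have b2: "\<bar>(s t - M)\<^sup>2\<bar> \<le> (B + \<bar>M\<bar>)^2" for t
    proof -
      have "\<bar>s t - M\<bar> \<le> B + \<bar>M\<bar>" using sb[of t] by linarith
      then have "\<bar>s t - M\<bar>^2 \<le> (B + \<bar>M\<bar>)^2" by (rule power_mono) simp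
      then show ?thesis by simp
    qed
    have i2: "set_integrable lborel {p<..<q} (\<lambda>t. (s t - M)\<^sup>2)" using bint(2)[OF m2 b2] .
    have i3: "set_integrable lborel {p<..<q} (\<lambda>t. b * M^2)"
      using bint(2)[of "\<lambda>_. b * M^2" "\<bar>b * M^2\<bar>"] by simp
    have i4: "set_integrable lborel {p<..<q} (\<lambda>t. (a + 2*b*M) * s t)"
      using i1 by simp
    have i5: "set_integrable lborel {p<..<q} (\<lambda>t. (a + 2*b*M) * s t - b * M^2)"
      using set_integral_diff(1)[OF i4 i3] .
    have i6: "set_integrable lborel {p<..<q} (\<lambda>t. b * (s t - M)\<^sup>2)"
      using i2 by simp
    have eq: "a * s t + b * (s t)\<^sup>2 = ((a + 2*b*M) * s t - b * M^2) + b * (s t - M)\<^sup>2" for t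
      by (simp add: power2_eq_square algebra_simps)
    have "(LINT t:{p<..<q}|lborel. a * s t + b * (s t)\<^sup>2)
        = (LINT t:{p<..<q}|lborel. ((a + 2*b*M) * s t - b * M^2) + b * (s t - M)\<^sup>2)"
      by (simp only: eq)
    also have "\<dots> = (LINT t:{p<..<q}|lborel. (a + 2*b*M) * s t - b * M^2) + (LINT t:{p<..<q}|lborel. b * (s t - M)\<^sup>2)"
      by (rule set_integral_add(2)[OF i5 i6])
    also have "(LINT t:{p<..<q}|lborel. (a + 2*b*M) * s t - b * M^2)
        = (LINT t:{p<..<q}|lborel. (a + 2*b*M) * s t) - (LINT t:{p<..<q}|lborel. b * M^2)"
      by (rule set_integral_diff(2)[OF i4 i3])
    also have "(LINT t:{p<..<q}|lborel. (a + 2*b*M) * s t) = (a + 2*b*M) * ((q - p) * M)"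
      using intS[OF pq] by (simp add: M_def)
    also have "(LINT t:{p<..<q}|lborel. b * M^2) = (q - p) * (b * M^2)"
      using set_integral_const[of "{p<..<q}" lborel "b * M^2"] pq' by simp
    also have "(LINT t:{p<..<q}|lborel. b * (s t - M)\<^sup>2) = b * h p q"
      by (simp add: h_def M_def)
    finally show ?thesis by (simp add: M_def algebra_simps power2_eq_square)
  qed
  have pery: "(LINT t:{p<..<q}|lborel. a * agg N ts te y t + b * (agg N ts te y t)\<^sup>2) = (q - p) * (a * m p q + b * (m p q)\<^sup>2)"
    if pq: "(p,q) \<in> C" for p q
  proof -
    have pq': "p < q" using pq by (simp add: C_def consecutive_def)
    have "(LINT t:{p<..<q}|lborel. a * agg N ts te y t + b * (agg N ts te y t)\<^sup>2)
        = (LINT t:{p<..<q}|lborel. a * m p q + b * (m p q)\<^sup>2)"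
      by (rule set_lebesgue_integral_cong) (use aggy[OF pq] in auto)
    also have "\<dots> = (q - p) * (a * m p q + b * (m p q)\<^sup>2)"
      using set_integral_const[of "{p<..<q}" lborel "a * m p q + b * (m p q)\<^sup>2"] pq' by simp
    finally show ?thesis .
  qed
  have hnn: "0 \<le> h p q" for p q
    unfolding h_def set_lebesgue_integral_def by (rule Bochner_Integration.integral_nonneg) (auto simp: indicator_def)
  have cx: "cost a b T N ts te x = cost a b T N ts te y + b * (\<Sum>(p,q)\<in>S0. h p q)"
  proof -
    have "cost a b T N ts te x = (\<Sum>(p,q)\<in>S0. (q - p) * (a * m p q + b * (m p q)\<^sup>2) + b * h p q)"
      unfolding costdec[OF sm' sb'] by (rule sum.cong[OF refl]) (use perx S0C in \<open>auto simp: s_def\<close>)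
    also have "\<dots> = (\<Sum>(p,q)\<in>S0. (q - p) * (a * m p q + b * (m p q)\<^sup>2)) + b * (\<Sum>(p,q)\<in>S0. h p q)"
      by (simp add: sum.distrib sum_distrib_left case_prod_beta)
    also have "(\<Sum>(p,q)\<in>S0. (q - p) * (a * m p q + b * (m p q)\<^sup>2)) = cost a b T N ts te y"
      unfolding costdec[OF aym ayb] by (rule sum.cong[OF refl]) (use pery S0C in auto)
    finally show ?thesis .
  qed
  have hsum: "(\<Sum>(p,q)\<in>S0. h p q) \<le> 0"
    using cx opt[OF feasy] assms(2) by (simp add: mult_le_0_iff)
  have h0: "h p q = 0" if pq: "(p,q) \<in> S0" for p q
  proof -
    have "(\<lambda>(p,q). h p q) (p,q) \<le> (\<Sum>(p,q)\<in>S0. h p q)"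
      by (rule member_le_sum[OF pq]) (use finS0 hnn in auto)
    then show ?thesis using hsum hnn[of p q] by simp
  qed
  have costle: "cost a b T N ts te y \<le> cost a b T N ts te x"
  proof -
    have "0 \<le> (\<Sum>(p,q)\<in>S0. h p q)" by (rule sum_nonneg) (use hnn in auto)
    then show ?thesis using cx assms(2) by simp
  qed
  show ?thesis
  proof (rule conjI)
    show "\<forall>t1 t2. consecutive (events T N ts te) t1 t2 \<longrightarrow>
            (\<exists>c. AE t in lborel. t \<in> {t1<..<t2} \<longrightarrow> agg N ts te x t = c)"
    proof (intro allI impI)
      fix t1 t2 assume c: "consecutive (events T N ts te) t1 t2"
      have inS0: "(t1,t2) \<in> S0" using c Esub by (auto simp: S0_def E_def consecutive_def)
      have hz: "h t1 t2 = 0" by (rule h0[OF inS0])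
      have m2: "(\<lambda>t. (s t - m t1 t2)\<^sup>2) \<in> borel_measurable lborel" using sm by measurable
      have b2: "\<bar>(s t - m t1 t2)\<^sup>2\<bar> \<le> (B + \<bar>m t1 t2\<bar>)^2" for t
      proof -
        have "\<bar>s t - m t1 t2\<bar> \<le> B + \<bar>m t1 t2\<bar>" using sb[of t] by linarith
        then have "\<bar>s t - m t1 t2\<bar>^2 \<le> (B + \<bar>m t1 t2\<bar>)^2" by (rule power_mono) simp
        then show ?thesis by simp
      qed
      have int: "integrable lborel (\<lambda>t. indicator {t1<..<t2} t *\<^sub>R (s t - m t1 t2)\<^sup>2)"
        using bint(2)[OF m2 b2, of t1 t2] unfolding set_integrable_def .
      have "AE t in lborel. indicator {t1<..<t2} t *\<^sub>R (s t - m t1 t2)\<^sup>2 = (0::real)"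
        using integral_nonneg_eq_0_iff_AE[OF int] hz
        by (simp add: h_def set_lebesgue_integral_def indicator_def)
      then show "\<exists>c. AE t in lborel. t \<in> {t1<..<t2} \<longrightarrow> agg N ts te x t = c"
        by (intro exI[of _ "m t1 t2"]) (auto elim!: eventually_mono simp: s_def indicator_def)
    qed
  next
    show "\<exists>y. optimal a b T N ts te D U y \<and>
            (\<forall>t1 t2. consecutive (events T N ts te) t1 t2 \<longrightarrow>
               (\<forall>i<N. \<exists>c. \<forall>t\<in>{t1<..<t2}. y i t = c))"
    proof (rule exI[of _ y], intro conjI allI impI)
      show "optimal a b T N ts te D U y"
        unfolding optimal_def using feasy costle opt by force
    next
      fix t1 t2 i assume c: "consecutive (events T N ts te) t1 t2" and i: "i < N"
      have pq: "(t1,t2) \<in> C" using c by (simp add: C_def E_def)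
      show "\<exists>c. \<forall>t\<in>{t1<..<t2}. y i t = c"
        using PW[OF pq] by blast
    qed
  qed
qed

end
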